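(* Let $K_1,\dots,K_M$ be matrices with $K_i\in\mathbb{R}^{p\times d_i}$ having orthonormal columns, and suppose $\mathrm{span}[K_1\,K_2\,\cdots\,K_M]=\mathbb{R}^p$. Let $A_i=\{\mathbf a\in\mathbb{R}^p:\ \exists\,\alpha^i\in\mathbb{R}^{d_i},\ \mathbf a=K_i\alpha^i,\ \|\mathbf a\|=\|\alpha^i\|=1\}$ and $\mathcal A=\bigcup_{i=1}^M A_i$. Then for every $\mathbf x\in\mathbb{R}^p$ the atomic norm satisfies \[\|\mathbf x\|_{\mathcal A}=\min_{\mathbf x=\sum_i K_i\alpha^i}\ \sum_{i=1}^M\|\alpha^i\|,\] where the minimum is over all families $\alpha^i\in\mathbb{R}^{d_i}$, $i=1,\dots,M$, with $\mathbf x=\sum_i K_i\alpha^i$.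
   Context: For a set of atoms $\mathcal A\subset\mathbb{R}^p$, the atomic norm of $\mathbf x\in\mathbb{R}^p$ is $\|\mathbf x\|_{\mathcal A}=\inf\{\sum_{\mathbf a\in\mathcal A}c_{\mathbf a}:\ \mathbf x=\sum_{\mathbf a\in\mathcal A}c_{\mathbf a}\mathbf a,\ c_{\mathbf a}\ge 0\}$ (only countably many, in fact finitely many, $c_{\mathbf a}$ nonzero). All norms without subscript are Euclidean norms. *)

theory Defs
  imports "HOL-Analysis.Analysis"
begin

definition atomic_norm :: "'a::real_vector set \<Rightarrow> 'a \<Rightarrow> real" where
  "atomic_norm A x = Inf {(\<Sum>a\<in>S. c a) | S c. finite S \<and> S \<subseteq> A \<and>
       (\<forall>a\<in>S. 0 \<le> c a) \<and> x = (\<Sum>a\<in>S. c a *\<^sub>R a)}"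

definition coord_norm :: "nat \<Rightarrow> (nat \<Rightarrow> real) \<Rightarrow> real" where
  "coord_norm d \<alpha> = sqrt (\<Sum>j<d. (\<alpha> j)\<^sup>2)"

text \<open>The p x d matrix with columns Kc 0, ..., Kc (d-1), applied to \<alpha>.\<close>
definition mat_apply :: "nat \<Rightarrow> (nat \<Rightarrow> 'a::real_vector) \<Rightarrow> (nat \<Rightarrow> real) \<Rightarrow> 'a" where
  "mat_apply d Kc \<alpha> = (\<Sum>j<d. \<alpha> j *\<^sub>R Kc j)"

end

theory Submission
  imports Defs
begin

lemma mat_apply_norm:
  assumes "\<And>j k. j < d \<Longrightarrow> k < d \<Longrightarrow> Kc j \<bullet> Kc k = (if j = k then 1 else (0::real))"
  shows "norm (mat_apply d Kc \<beta>) = coord_norm d \<beta>"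
proof -
  have "mat_apply d Kc \<beta> \<bullet> mat_apply d Kc \<beta> = (\<Sum>j<d. \<Sum>k<d. \<beta> j * (\<beta> k * (Kc k \<bullet> Kc j)))"
    by (simp add: mat_apply_def inner_sum_left inner_sum_right sum_distrib_left mult.assoc)
  also have "\<dots> = (\<Sum>j<d. (\<beta> j)\<^sup>2)"
    by (rule sum.cong) (auto simp: assms if_distrib power2_eq_square cong: if_cong)
  finally show ?thesis by (simp add: norm_eq_sqrt_inner coord_norm_def)
qed

lemma coord_norm_nonneg: "0 \<le> coord_norm d \<beta>"
  by (simp add: coord_norm_def sum_nonneg)

lemma coord_norm_ge: "j < d \<Longrightarrow> \<bar>\<beta> j\<bar> \<le> coord_norm d \<beta>"
proof -
  assume "j < d"
  then have "(\<beta> j)\<^sup>2 \<le> (\<Sum>j<d. (\<beta> j)\<^sup>2)"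
    by (intro member_le_sum) auto
  then have "sqrt ((\<beta> j)\<^sup>2) \<le> coord_norm d \<beta>" unfolding coord_norm_def
    using real_sqrt_le_mono by blast
  then show ?thesis by simp
qed

lemma mat_apply_scale: "mat_apply d Kc (\<lambda>j. t * \<beta> j) = t *\<^sub>R mat_apply d Kc \<beta>"
  by (simp add: mat_apply_def scaleR_sum_right)

lemma mat_apply_lin:
  "mat_apply d Kc (\<lambda>j. \<Sum>a\<in>T. c a * g a j) = (\<Sum>a\<in>T. c a *\<^sub>R mat_apply d Kc (g a))"
  unfolding mat_apply_def
  by (simp add: scaleR_sum_left scaleR_sum_right sum.swap[of _ T])

lemma group_sum:
  fixes g :: "'b \<Rightarrow> 'a::comm_monoid_add"
  assumes "finite S" "\<forall>a\<in>S. iv a < (M::nat)"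
  shows "(\<Sum>i<M. \<Sum>a\<in>{a\<in>S. iv a = i}. g a) = (\<Sum>a\<in>S. g a)"
proof -
  have "(\<Sum>i<M. \<Sum>a\<in>{a\<in>S. iv a = i}. g a) = (\<Sum>i<M. \<Sum>a\<in>S. if iv a = i then g a else 0)"
    using assms by (simp add: sum.inter_filter)
  also have "\<dots> = (\<Sum>a\<in>S. \<Sum>i<M. if iv a = i then g a else 0)"
    by (rule sum.swap)
  also have "\<dots> = (\<Sum>a\<in>S. g a)"
    using assms by (intro sum.cong) (auto simp: sum.delta')
  finally show ?thesis .
qed

lemma atomic_rep:
  fixes a :: "nat \<Rightarrow> 'a::real_vector"
  assumes "finite I" "\<forall>i\<in>I. a i \<in> A \<and> 0 \<le> w i"
  shows "\<exists>S c. finite S \<and> S \<subseteq> A \<and> (\<forall>v\<in>S. 0 \<le> c v) \<and> (\<Sum>v\<in>S. c v) = (\<Sum>i\<in>I. w i)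
     \<and> (\<Sum>v\<in>S. c v *\<^sub>R v) = (\<Sum>i\<in>I. w i *\<^sub>R a i)"
proof (intro exI conjI)
  define c where "c v = (\<Sum>i\<in>{i\<in>I. a i = v}. w i)" for v
  show "finite (a ` I)" using assms by simp
  show "a ` I \<subseteq> A" using assms by auto
  show "\<forall>v\<in>a ` I. 0 \<le> c v" using assms by (auto simp: c_def intro!: sum_nonneg)
  show "(\<Sum>v\<in>a ` I. c v) = (\<Sum>i\<in>I. w i)"
    unfolding c_def using sum.image_gen[OF assms(1), of w a] by simp
  have "(\<Sum>v\<in>a ` I. c v *\<^sub>R v) = (\<Sum>v\<in>a ` I. \<Sum>i\<in>{i\<in>I. a i = v}. w i *\<^sub>R a i)"
    unfolding c_def scaleR_sum_left by (intro sum.cong refl) auto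
  also have "\<dots> = (\<Sum>i\<in>I. w i *\<^sub>R a i)"
    using sum.image_gen[OF assms(1), of "\<lambda>i. w i *\<^sub>R a i" a] by simp
  finally show "(\<Sum>v\<in>a ` I. c v *\<^sub>R v) = (\<Sum>i\<in>I. w i *\<^sub>R a i)" .
qed

lemma subseq_finite:
  fixes s :: "nat \<Rightarrow> 'q \<Rightarrow> real"
  assumes "finite P" "\<forall>p\<in>P. bounded (range (\<lambda>n. s n p))"
  shows "\<exists>r. strict_mono r \<and> (\<forall>p\<in>P. convergent (\<lambda>n. s (r n) p))"
  using assms
proof (induction P rule: finite_induct)
  case empty
  then show ?case by (auto intro: strict_mono_id)
next
  case (insert p F)
  then obtain r where r: "strict_mono r" "\<forall>q\<in>F. convergent (\<lambda>n. s (r n) q)" by auto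
  have "bounded (range (\<lambda>n. s n p))" using insert(4) by simp
  then have "bounded (range (\<lambda>n. s (r n) p))"
    by (rule bounded_subset) auto
  then obtain l r' where r': "strict_mono r'" "((\<lambda>n. s (r n) p) \<circ> r') \<longlonglongrightarrow> l"
    using bounded_imp_convergent_subsequence by blast
  show ?case
  proof (intro exI conjI ballI)
    show "strict_mono (r \<circ> r')" using r r' by (simp add: strict_mono_o)
    fix q assume "q \<in> insert p F"
    then show "convergent (\<lambda>n. s ((r \<circ> r') n) q)"
    proof
      assume "q = p" then show ?thesis using r' by (auto simp: convergent_def o_def)
    next
      assume "q \<in> F"
      then obtain L where "(\<lambda>n. s (r n) q) \<longlonglongrightarrow> L" using r convergent_def by blast
      from LIMSEQ_subseq_LIMSEQ[OF this r'(1)] show ?thesis by (auto simp: convergent_def o_def)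
    qed
  qed
qed

theorem lemma1:
  fixes M :: nat and d :: "nat \<Rightarrow> nat"
    and K :: "nat \<Rightarrow> nat \<Rightarrow> real ^ 'p"
    and x :: "real ^ 'p"
  assumes orthonormal: "\<And>i j k. i < M \<Longrightarrow> j < d i \<Longrightarrow> k < d i \<Longrightarrow>
             K i j \<bullet> K i k = (if j = k then 1 else 0)"
    and spanning: "span {K i j | i j. i < M \<and> j < d i} = UNIV"
  shows "(\<exists>\<alpha>. x = (\<Sum>i<M. mat_apply (d i) (K i) (\<alpha> i)) \<and>
              atomic_norm (\<Union>i<M. {a. \<exists>\<beta>. a = mat_apply (d i) (K i) \<beta> \<and> norm a = 1 \<and> coord_norm (d i) \<beta> = 1}) x
                = (\<Sum>i<M. coord_norm (d i) (\<alpha> i)))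
       \<and> (\<forall>\<alpha>. x = (\<Sum>i<M. mat_apply (d i) (K i) (\<alpha> i)) \<longrightarrow>
              atomic_norm (\<Union>i<M. {a. \<exists>\<beta>. a = mat_apply (d i) (K i) \<beta> \<and> norm a = 1 \<and> coord_norm (d i) \<beta> = 1}) x
                \<le> (\<Sum>i<M. coord_norm (d i) (\<alpha> i)))"
proof -
  define A where "A = (\<Union>i<M. {a. \<exists>\<beta>. a = mat_apply (d i) (K i) \<beta> \<and> norm a = 1 \<and> coord_norm (d i) \<beta> = 1})"
  define V where "V = {(\<Sum>a\<in>S. c a) | S c. finite S \<and> S \<subseteq> A \<and> (\<forall>a\<in>S. 0 \<le> c a) \<and> x = (\<Sum>a\<in>S. c a *\<^sub>R a)}"
  have N: "atomic_norm A x = Inf V" by (simp add: atomic_norm_def V_def)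
  define R where "R = {\<alpha>. x = (\<Sum>i<M. mat_apply (d i) (K i) (\<alpha> i))}"
  define f where "f \<alpha> = (\<Sum>i<M. coord_norm (d i) (\<alpha> i))" for \<alpha>
  have orth: "norm (mat_apply (d i) (K i) \<beta>) = coord_norm (d i) \<beta>" if "i < M" for i \<beta>
    by (rule mat_apply_norm) (use orthonormal that in auto)
  have f_nonneg: "0 \<le> f \<alpha>" for \<alpha> by (simp add: f_def sum_nonneg coord_norm_nonneg)
  have V_nonneg: "\<forall>v\<in>V. 0 \<le> v" by (auto simp: V_def intro!: sum_nonneg)
  have bddV: "bdd_below V" using V_nonneg by (auto simp: bdd_below_def)
  have a: "f \<alpha> \<in> V" if "\<alpha> \<in> R" for \<alpha>
  proof -
    define cn where "cn i = coord_norm (d i) (\<alpha> i)" for i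
    define I where "I = {i. i < M \<and> cn i \<noteq> 0}"
    define atm where "atm i = mat_apply (d i) (K i) (\<lambda>j. (1 / cn i) * \<alpha> i j)" for i
    have cnpos: "0 < cn i" if "i \<in> I" for i
      using that coord_norm_nonneg[of "d i" "\<alpha> i"] by (auto simp: I_def cn_def)
    have atA: "atm i \<in> A" if "i \<in> I" for i
    proof -
      have iM: "i < M" using that by (simp add: I_def)
      have "norm (atm i) = 1"
        unfolding atm_def mat_apply_scale using orth[OF iM, of "\<alpha> i"] cnpos[OF that]
        by (simp add: cn_def)
      moreover have "coord_norm (d i) (\<lambda>j. (1 / cn i) * \<alpha> i j) = 1"
        using orth[OF iM] \<open>norm (atm i) = 1\<close> by (simp add: atm_def)
      ultimately show ?thesis using iM unfolding A_def atm_def by blast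
    qed
    have sc: "cn i *\<^sub>R atm i = mat_apply (d i) (K i) (\<alpha> i)" if "i \<in> I" for i
      unfolding atm_def mat_apply_scale using cnpos[OF that] by simp
    have finI: "finite I" by (simp add: I_def)
    obtain S c where Sc: "finite S" "S \<subseteq> A" "\<forall>v\<in>S. 0 \<le> c v" "(\<Sum>v\<in>S. c v) = (\<Sum>i\<in>I. cn i)"
      "(\<Sum>v\<in>S. c v *\<^sub>R v) = (\<Sum>i\<in>I. cn i *\<^sub>R atm i)"
      using atomic_rep[OF finI, of atm A cn] atA coord_norm_nonneg by (auto simp: cn_def)
    have "(\<Sum>i\<in>I. cn i) = f \<alpha>"
      unfolding f_def cn_def[symmetric] by (rule sum.mono_neutral_left) (auto simp: I_def)
    moreover have "(\<Sum>i\<in>I. cn i *\<^sub>R atm i) = x"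
    proof -
      have "(\<Sum>i\<in>I. cn i *\<^sub>R atm i) = (\<Sum>i\<in>I. mat_apply (d i) (K i) (\<alpha> i))"
        using sc by simp
      also have "\<dots> = (\<Sum>i<M. mat_apply (d i) (K i) (\<alpha> i))"
      proof (rule sum.mono_neutral_left)
        show "\<forall>i\<in>{..<M} - I. mat_apply (d i) (K i) (\<alpha> i) = 0"
        proof
          fix i assume "i \<in> {..<M} - I"
          then have "i < M" "cn i = 0" by (auto simp: I_def)
          then show "mat_apply (d i) (K i) (\<alpha> i) = 0"
            using orth[of i "\<alpha> i"] by (simp add: cn_def)
        qed
      qed (auto simp: I_def)
      finally show ?thesis using that by (simp add: R_def)
    qed
    ultimately have "f \<alpha> = (\<Sum>v\<in>S. c v) \<and> finite S \<and> S \<subseteq> A \<and> (\<forall>a\<in>S. 0 \<le> c a) \<and> x = (\<Sum>a\<in>S. c a *\<^sub>R a)"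
      using Sc by simp
    then show ?thesis unfolding V_def by blast
  qed
  have b: "\<exists>\<alpha>\<in>R. f \<alpha> \<le> v" if "v \<in> V" for v
  proof -
    obtain S c where S: "finite S" "S \<subseteq> A" "\<forall>a\<in>S. 0 \<le> c a" "x = (\<Sum>a\<in>S. c a *\<^sub>R a)"
      "v = (\<Sum>a\<in>S. c a)"
      using \<open>v \<in> V\<close> unfolding V_def by blast
    have "\<forall>a\<in>S. \<exists>i \<beta>. i < M \<and> a = mat_apply (d i) (K i) \<beta> \<and> norm a = 1"
      using S(2) unfolding A_def by blast
    then obtain iv \<beta> where ib: "\<forall>a\<in>S. iv a < M \<and> a = mat_apply (d (iv a)) (K (iv a)) (\<beta> a) \<and> norm a = 1"
      by metis
    define \<alpha> where "\<alpha> i j = (\<Sum>a\<in>{a\<in>S. iv a = i}. c a * \<beta> a j)" for i j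
    have mi: "mat_apply (d i) (K i) (\<alpha> i) = (\<Sum>a\<in>{a\<in>S. iv a = i}. c a *\<^sub>R a)" for i
      unfolding \<alpha>_def mat_apply_lin using ib by (intro sum.cong refl) auto
    have ivM: "\<forall>a\<in>S. iv a < M" using ib by auto
    have "\<alpha> \<in> R"
      unfolding R_def using group_sum[OF S(1) ivM, of "\<lambda>a. c a *\<^sub>R a"] S(4) by (simp add: mi)
    moreover have "f \<alpha> \<le> v"
    proof -
      have "f \<alpha> = (\<Sum>i<M. norm (\<Sum>a\<in>{a\<in>S. iv a = i}. c a *\<^sub>R a))"
        unfolding f_def by (intro sum.cong refl) (simp add: orth[symmetric] mi)
      also have "\<dots> \<le> (\<Sum>i<M. \<Sum>a\<in>{a\<in>S. iv a = i}. c a)"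
      proof (rule sum_mono)
        fix i
        have "norm (\<Sum>a\<in>{a\<in>S. iv a = i}. c a *\<^sub>R a) \<le> (\<Sum>a\<in>{a\<in>S. iv a = i}. norm (c a *\<^sub>R a))"
          by (rule norm_sum)
        also have "\<dots> = (\<Sum>a\<in>{a\<in>S. iv a = i}. c a)"
          using ib S(3) by (intro sum.cong refl) auto
        finally show "norm (\<Sum>a\<in>{a\<in>S. iv a = i}. c a *\<^sub>R a) \<le> (\<Sum>a\<in>{a\<in>S. iv a = i}. c a)" .
      qed
      also have "\<dots> = v" using group_sum[OF S(1) ivM, of c] S(5) by simp
      finally show ?thesis .
    qed
    ultimately show ?thesis by blast
  qed
  have c: "R \<noteq> {}"
  proof -
    define Q where "Q = {y. \<exists>\<alpha>. y = (\<Sum>i<M. mat_apply (d i) (K i) (\<alpha> i))}"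
    have sub: "subspace Q"
      unfolding subspace_def
    proof (intro conjI ballI allI)
      show "0 \<in> Q" unfolding Q_def
        by (rule CollectI, rule exI[of _ "\<lambda>i j. 0"]) (simp add: mat_apply_def)
    next
      fix y z assume "y \<in> Q" "z \<in> Q"
      then obtain \<alpha> \<gamma> where "y = (\<Sum>i<M. mat_apply (d i) (K i) (\<alpha> i))" "z = (\<Sum>i<M. mat_apply (d i) (K i) (\<gamma> i))"
        unfolding Q_def by blast
      then show "y + z \<in> Q" unfolding Q_def
        by (intro CollectI exI[of _ "\<lambda>i j. \<alpha> i j + \<gamma> i j"])
           (simp add: mat_apply_def scaleR_add_left sum.distrib)
    next
      fix t y assume "y \<in> Q"
      then obtain \<alpha> where "y = (\<Sum>i<M. mat_apply (d i) (K i) (\<alpha> i))"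
        unfolding Q_def by blast
      then show "t *\<^sub>R y \<in> Q" unfolding Q_def
        by (intro CollectI exI[of _ "\<lambda>i j. t * \<alpha> i j"])
           (simp add: mat_apply_scale scaleR_sum_right)
    qed
    have gen: "{K i j | i j. i < M \<and> j < d i} \<subseteq> Q"
    proof
      fix y assume "y \<in> {K i j | i j. i < M \<and> j < d i}"
      then obtain i0 j0 where ij: "i0 < M" "j0 < d i0" "y = K i0 j0" by blast
      define \<alpha> where "\<alpha> i j = (if i = i0 \<and> j = j0 then 1 else (0::real))" for i j
      have inner: "mat_apply (d i) (K i) (\<alpha> i) = (if i = i0 then K i0 j0 else 0)" for i
      proof (cases "i = i0")
        case True
        have "mat_apply (d i) (K i) (\<alpha> i) = (\<Sum>j<d i0. if j = j0 then K i0 j else 0)"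
          unfolding mat_apply_def \<alpha>_def using True by (intro sum.cong) auto
        then show ?thesis using True ij by simp
      next
        case False
        then show ?thesis by (simp add: mat_apply_def \<alpha>_def)
      qed
      have "(\<Sum>i<M. mat_apply (d i) (K i) (\<alpha> i)) = K i0 j0"
        using ij by (simp add: inner)
      then show "y \<in> Q" unfolding Q_def using ij by (intro CollectI exI[of _ \<alpha>]) simp
    qed
    have "span {K i j | i j. i < M \<and> j < d i} \<subseteq> Q"
      by (rule span_minimal[OF gen sub])
    then have "x \<in> Q" using spanning by (metis UNIV_I subsetD)
    then obtain \<alpha> where "x = (\<Sum>i<M. mat_apply (d i) (K i) (\<alpha> i))" unfolding Q_def by blast
    then have "\<alpha> \<in> R" unfolding R_def by simp
    then show ?thesis by blast
  qed
  define m where "m = Inf (f ` R)"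
  have bddf: "bdd_below (f ` R)" using f_nonneg by (auto simp: bdd_below_def)
  have mle: "m \<le> f \<alpha>" if "\<alpha> \<in> R" for \<alpha>
    unfolding m_def using bddf that by (auto intro: cInf_lower)
  have "\<exists>\<alpha>\<in>R. f \<alpha> < m + inverse (real (Suc n))" for n
  proof -
    have "Inf (f ` R) < m + inverse (real (Suc n))" unfolding m_def by simp
    then obtain y where "y \<in> f ` R" "y < m + inverse (real (Suc n))"
      using cInf_lessD[of "f ` R"] c by blast
    then show ?thesis by auto
  qed
  then obtain s where s: "\<And>n. s n \<in> R" "\<And>n. f (s n) < m + inverse (real (Suc n))"
    by metis
  define P where "P = Sigma {..<M} (\<lambda>i. {..<d i})"
  define s' where "s' n p = s n (fst p) (snd p)" for n p
  have "\<forall>p\<in>P. bounded (range (\<lambda>n. s' n p))"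
  proof
    fix p assume "p \<in> P"
    then have p: "fst p < M" "snd p < d (fst p)" by (auto simp: P_def)
    have "\<bar>s' n p\<bar> \<le> m + 1" for n
    proof -
      have "\<bar>s' n p\<bar> \<le> coord_norm (d (fst p)) (s n (fst p))"
        unfolding s'_def by (rule coord_norm_ge[OF p(2)])
      also have "\<dots> \<le> f (s n)" unfolding f_def
        by (rule member_le_sum) (use p coord_norm_nonneg in auto)
      also have "\<dots> \<le> m + 1" using s(2)[of n]
        by (smt (verit) inverse_le_1_iff of_nat_0_le_iff of_nat_Suc)
      finally show ?thesis .
    qed
    then show "bounded (range (\<lambda>n. s' n p))" unfolding bounded_real by blast
  qed
  then obtain r where r: "strict_mono r" "\<forall>p\<in>P. convergent (\<lambda>n. s' (r n) p)"
    using subseq_finite[of P s'] by (auto simp: P_def)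
  define \<alpha>0 where "\<alpha>0 i j = lim (\<lambda>n. s (r n) i j)" for i j
  have conv: "(\<lambda>n. s (r n) i j) \<longlonglongrightarrow> \<alpha>0 i j" if "i < M" "j < d i" for i j
  proof -
    have "(i, j) \<in> P" using that by (simp add: P_def)
    then have "convergent (\<lambda>n. s (r n) i j)" using r(2) by (auto simp: s'_def)
    then show ?thesis unfolding \<alpha>0_def by (simp add: convergent_LIMSEQ_iff)
  qed
  have "(\<lambda>n. \<Sum>i<M. mat_apply (d i) (K i) (s (r n) i)) \<longlonglongrightarrow> (\<Sum>i<M. mat_apply (d i) (K i) (\<alpha>0 i))"
    unfolding mat_apply_def
    by (intro tendsto_sum tendsto_scaleR conv tendsto_const) auto
  moreover have "(\<lambda>n. \<Sum>i<M. mat_apply (d i) (K i) (s (r n) i)) = (\<lambda>n. x)"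
    using s(1) by (simp add: R_def)
  ultimately have "(\<lambda>n. x) \<longlonglongrightarrow> (\<Sum>i<M. mat_apply (d i) (K i) (\<alpha>0 i))" by simp
  then have "x = (\<Sum>i<M. mat_apply (d i) (K i) (\<alpha>0 i))" by (rule LIMSEQ_unique[OF tendsto_const])
  then have "\<alpha>0 \<in> R" unfolding R_def by simp
  have lim1: "(\<lambda>n. f (s (r n))) \<longlonglongrightarrow> f \<alpha>0"
    unfolding f_def coord_norm_def
    by (intro tendsto_sum tendsto_real_sqrt tendsto_power conv) auto
  have lim2: "(\<lambda>n. f (s (r n))) \<longlonglongrightarrow> m"
  proof (rule real_tendsto_sandwich[of "\<lambda>n. m" _ _ "\<lambda>n. m + inverse (real (Suc n))"])
    show "\<forall>\<^sub>F n in sequentially. m \<le> f (s (r n))" using mle s(1) by auto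
    show "\<forall>\<^sub>F n in sequentially. f (s (r n)) \<le> m + inverse (real (Suc n))"
    proof (rule always_eventually, rule allI)
      fix n
      have "n \<le> r n" using r(1) by (rule seq_suble)
      then have "inverse (real (Suc (r n))) \<le> inverse (real (Suc n))"
        by (simp add: le_imp_inverse_le)
      then show "f (s (r n)) \<le> m + inverse (real (Suc n))" using s(2)[of "r n"] by linarith
    qed
    show "(\<lambda>n. m) \<longlonglongrightarrow> m" by simp
    show "(\<lambda>n. m + inverse (real (Suc n))) \<longlonglongrightarrow> m" by (rule LIMSEQ_inverse_real_of_nat_add)
  qed
  have fm: "f \<alpha>0 = m" using LIMSEQ_unique[OF lim1 lim2] .
  have "Inf V = f \<alpha>0"
  proof (rule antisym)
    show "Inf V \<le> f \<alpha>0" using a[OF \<open>\<alpha>0 \<in> R\<close>] bddV by (rule cInf_lower)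
    show "f \<alpha>0 \<le> Inf V"
    proof (rule cInf_greatest)
      show "V \<noteq> {}" using a c by blast
      fix v assume "v \<in> V"
      then obtain \<alpha> where "\<alpha> \<in> R" "f \<alpha> \<le> v" using b by blast
      then show "f \<alpha>0 \<le> v" using mle fm by fastforce
    qed
  qed
  have main: "(\<exists>\<alpha>. \<alpha> \<in> R \<and> atomic_norm A x = f \<alpha>) \<and> (\<forall>\<alpha>. \<alpha> \<in> R \<longrightarrow> atomic_norm A x \<le> f \<alpha>)"
  proof (intro conjI allI impI)
    show "\<exists>\<alpha>. \<alpha> \<in> R \<and> atomic_norm A x = f \<alpha>"
      using \<open>\<alpha>0 \<in> R\<close> \<open>Inf V = f \<alpha>0\<close> N by (intro exI[of _ \<alpha>0]) simp
    fix \<alpha> assume "\<alpha> \<in> R"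
    then show "atomic_norm A x \<le> f \<alpha>" unfolding N using a bddV by (intro cInf_lower)
  qed
  then show ?thesis by (simp add: A_def R_def f_def)
qed

end
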